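(* There is a function $g(n)\to 0$ as $n\to\infty$ such that the following holds for all $n$, all $\delta\in[0,1]$ and $\eta>0$: if $F\subseteq E(K_n)$ satisfies $|F|>(1-\delta)n^2/4$ and $|F\setminus\Pi|>\eta n^2$ for every cut $\Pi$ of $K_n$, then $\tau(F)>\tfrac{1}{12}(\eta-3\delta-g(n))n^3$.
   Context: $K_n$ is the complete graph on $[n]$. A cut of $K_n$ is a set $\Pi=\nabla(W,[n]\setminus W)$ of all edges of $K_n$ joining $W$ and $[n]\setminus W$, for some $W\subseteq[n]$ (including $W=\emptyset$). $\tau(F)$ is the number of triangles of $K_n$ all of whose three edges lie in $F$. *)

theory Defs
  imports Complex_Main
begin

definition edges_K :: "nat \<Rightarrow> nat set set" where
  "edges_K n = {e. e \<subseteq> {1..n} \<and> card e = 2}"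

definition cut_K :: "nat \<Rightarrow> nat set \<Rightarrow> nat set set" where
  "cut_K n W = {e \<in> edges_K n. \<exists>u v. e = {u, v} \<and> u \<in> W \<and> v \<in> {1..n} - W}"

definition is_cut :: "nat \<Rightarrow> nat set set \<Rightarrow> bool" where
  "is_cut n P \<longleftrightarrow> (\<exists>W. W \<subseteq> {1..n} \<and> P = cut_K n W)"

definition tau :: "nat \<Rightarrow> nat set set \<Rightarrow> nat" where
  "tau n F = card {T. T \<subseteq> {1..n} \<and> card T = 3 \<and> (\<forall>e. e \<subseteq> T \<and> card e = 2 \<longrightarrow> e \<in> F)}"

end

theory Submission
  imports Defs
begin

lemma sum_ind_card:
  assumes "finite A"
  shows "(\<Sum>p\<in>A. if P p then 1 else (0::real)) = real (card {p\<in>A. P p})"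
  using assms by (simp add: sum.If_cases Int_def)

lemma edge_count:
  assumes S: "S \<subseteq> edges_K n"
  shows "2 * real (card S) = (\<Sum>x\<in>{1..n}. \<Sum>y\<in>{1..n}. if {x,y} \<in> S then 1 else (0::real))"
proof -
  let ?V = "{1..n::nat}"
  have fS: "finite S"
    by (rule finite_subset[OF S]) (auto simp: edges_K_def intro: finite_subset[of _ "Pow {1..n}"])
  have "(\<Sum>x\<in>?V. \<Sum>y\<in>?V. if {x,y} \<in> S then 1 else (0::real))
      = (\<Sum>(x,y)\<in>?V\<times>?V. if {x,y} \<in> S then 1 else (0::real))"
    by (rule sum.cartesian_product)
  also have "\<dots> = (\<Sum>p\<in>?V\<times>?V. if (case p of (x,y) \<Rightarrow> {x,y} \<in> S) then 1 else (0::real))"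
    by (intro sum.cong) auto
  also have "\<dots> = real (card {p\<in>?V\<times>?V. case p of (x,y) \<Rightarrow> {x,y} \<in> S})"
    by (rule sum_ind_card) auto
  also have "{p\<in>?V\<times>?V. case p of (x,y) \<Rightarrow> {x,y} \<in> S} = (\<Union>e\<in>S. {(x,y). {x,y} = e \<and> x \<noteq> y})"
  proof -
    have ne: "a \<noteq> b" if "{a,b} \<in> S" for a b
    proof -
      have "card {a,b} = 2" using S that by (auto simp: edges_K_def)
      then show ?thesis by (cases "a = b") auto
    qed
    have inV: "a \<in> ?V \<and> b \<in> ?V" if "{a,b} \<in> S" for a b
      using S that by (auto simp: edges_K_def)
    show ?thesis using ne inV by fastforce
  qed
  also have "card (\<Union>e\<in>S. {(x,y). {x,y} = e \<and> x \<noteq> y}) = (\<Sum>e\<in>S. card {(x,y). {x,y} = e \<and> x \<noteq> y})"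
  proof (rule card_UN_disjoint[OF fS])
    show "\<forall>e\<in>S. finite {(x, y). {x, y} = e \<and> x \<noteq> y}"
    proof
      fix e assume "e \<in> S"
      then have "card e = 2" using S by (auto simp: edges_K_def)
      then obtain u v where "e = {u,v}" "u \<noteq> v" by (auto simp: card_2_iff)
      then have "{(x,y). {x,y} = e \<and> x \<noteq> y} = {(u,v),(v,u)}" by (auto simp: doubleton_eq_iff)
      then show "finite {(x, y). {x, y} = e \<and> x \<noteq> y}" by simp
    qed
  qed auto
  also have "\<dots> = (\<Sum>e\<in>S. 2)"
  proof (rule sum.cong)
    fix e assume "e \<in> S"
    then have "card e = 2" using S by (auto simp: edges_K_def)
    then obtain u v where "e = {u,v}" "u \<noteq> v" by (auto simp: card_2_iff)
    then have "{(x,y). {x,y} = e \<and> x \<noteq> y} = {(u,v),(v,u)}" by (auto simp: doubleton_eq_iff)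
    then show "card {(x,y). {x,y} = e \<and> x \<noteq> y} = 2" using \<open>u\<noteq>v\<close> by simp
  qed simp
  finally show ?thesis by simp
qed

lemma two_subset_of_three:
  assumes "e \<subseteq> {x,y,z}" "card e = 2"
  shows "e = {x,y} \<or> e = {y,z} \<or> e = {x,z}"
proof -
  obtain u v where e: "e = {u,v}" "u \<noteq> v" using assms(2) by (auto simp: card_2_iff)
  then show ?thesis using assms(1) by (auto simp: insert_commute)
qed

lemma perm3:
  assumes "{x,y,z} = {a,b,c::'a}" "x\<noteq>y" "y\<noteq>z" "x\<noteq>z"
  shows "(x,y,z) \<in> set [(a,b,c),(a,c,b),(b,a,c),(b,c,a),(c,a,b),(c,b,a)]"
proof -
  have "x\<in>{a,b,c}" "y\<in>{a,b,c}" "z\<in>{a,b,c}" using assms(1) by blast+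
  then show ?thesis using assms(2-4) by auto
qed

lemma tri_count:
  assumes F: "F \<subseteq> edges_K n"
  shows "(\<Sum>x\<in>{1..n}. \<Sum>y\<in>{1..n}. \<Sum>z\<in>{1..n}.
      (if {x,y} \<in> F then 1 else 0) * (if {y,z} \<in> F then 1 else 0) * (if {x,z} \<in> F then 1 else (0::real)))
      \<le> 6 * real (tau n F)"
proof -
  let ?V = "{1..n::nat}"
  let ?P = "\<lambda>x y z. {x,y} \<in> F \<and> {y,z} \<in> F \<and> {x,z} \<in> F"
  let ?A = "{p \<in> ?V \<times> ?V \<times> ?V. case p of (x,y,z) \<Rightarrow> ?P x y z}"
  let ?Tri = "{T. T \<subseteq> ?V \<and> card T = 3 \<and> (\<forall>e. e \<subseteq> T \<and> card e = 2 \<longrightarrow> e \<in> F)}"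
  let ?fib = "\<lambda>T. {(x,y,z). {x,y,z} = T \<and> x\<noteq>y \<and> y\<noteq>z \<and> x\<noteq>z}"
  have ne: "a \<noteq> b" if "{a,b} \<in> F" for a b
  proof -
    have "card {a,b} = 2" using F that by (auto simp: edges_K_def)
    then show ?thesis by (cases "a = b") auto
  qed
  have "(\<Sum>x\<in>?V. \<Sum>y\<in>?V. \<Sum>z\<in>?V.
      (if {x,y} \<in> F then 1 else 0) * (if {y,z} \<in> F then 1 else 0) * (if {x,z} \<in> F then 1 else (0::real)))
    = (\<Sum>x\<in>?V. \<Sum>(y,z)\<in>?V\<times>?V. if ?P x y z then 1 else (0::real))"
    by (intro sum.cong refl, subst sum.cartesian_product) (auto intro!: sum.cong)
  also have "\<dots> = (\<Sum>(x,yz)\<in>?V\<times>(?V\<times>?V). case yz of (y,z) \<Rightarrow> if ?P x y z then 1 else (0::real))"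
    by (subst sum.cartesian_product[symmetric]) (simp add: split_def)
  also have "\<dots> = (\<Sum>p\<in>?V\<times>?V\<times>?V. if (case p of (x,y,z) \<Rightarrow> ?P x y z) then 1 else (0::real))"
    by (intro sum.cong refl) (simp split: prod.split)
  also have "\<dots> = real (card ?A)"
    by (rule sum_ind_card[of "?V\<times>?V\<times>?V" "\<lambda>p. case p of (x,y,z) \<Rightarrow> ?P x y z"]) auto
  finally have eq: "(\<Sum>x\<in>?V. \<Sum>y\<in>?V. \<Sum>z\<in>?V.
      (if {x,y} \<in> F then 1 else 0) * (if {y,z} \<in> F then 1 else 0) * (if {x,z} \<in> F then 1 else (0::real)))
      = real (card ?A)" .
  have "?Tri \<subseteq> Pow ?V" by auto
  then have fT: "finite ?Tri" by (rule finite_subset) auto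
  have "card ?A \<le> card (\<Union>T\<in>?Tri. ?fib T)"
  proof (rule card_mono)
    show "finite (\<Union>T\<in>?Tri. ?fib T)"
    proof (rule finite_UN_I[OF fT])
      fix T assume "T \<in> ?Tri"
      then have "?fib T \<subseteq> ?V \<times> ?V \<times> ?V" by auto
      then show "finite (?fib T)" by (rule finite_subset) auto
    qed
    show "?A \<subseteq> (\<Union>T\<in>?Tri. ?fib T)"
    proof
      fix p assume p: "p \<in> ?A"
      then obtain x y z where pe: "p = (x,y,z)" and xyz: "x\<in>?V" "y\<in>?V" "z\<in>?V" "?P x y z" by auto
      have d: "x\<noteq>y" "y\<noteq>z" "x\<noteq>z" using xyz ne by auto
      have "{x,y,z} \<in> ?Tri"
        using xyz d two_subset_of_three[of _ x y z] by auto
      then show "p \<in> (\<Union>T\<in>?Tri. ?fib T)" using pe d by blast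
    qed
  qed
  also have "\<dots> \<le> (\<Sum>T\<in>?Tri. card (?fib T))"
    by (rule card_UN_le[OF fT])
  also have "\<dots> \<le> (\<Sum>T\<in>?Tri. 6)"
  proof (rule sum_mono)
    fix T assume "T \<in> ?Tri"
    then have "card T = 3" by auto
    then obtain a b c where T: "T = {a,b,c}" by (auto simp: card_3_iff)
    have "?fib T \<subseteq> set [(a,b,c),(a,c,b),(b,a,c),(b,c,a),(c,a,b),(c,b,a)]"
    proof
      fix p assume "p \<in> ?fib T"
      then obtain x y z where "p=(x,y,z)" "{x,y,z} = {a,b,c}" "x\<noteq>y" "y\<noteq>z" "x\<noteq>z" using T by auto
      then show "p \<in> set [(a,b,c),(a,c,b),(b,a,c),(b,c,a),(c,a,b),(c,b,a)]"
        using perm3[of x y z a b c] by simp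
    qed
    then have "card (?fib T) \<le> card (set [(a,b,c),(a,c,b),(b,a,c),(b,c,a),(c,a,b),(c,b,a)])"
      by (intro card_mono) auto
    also have "\<dots> \<le> 6" using card_length[of "[(a,b,c),(a,c,b),(b,a,c),(b,c,a),(c,a,b),(c,b,a)]"] by simp
    finally show "card (?fib T) \<le> 6" .
  qed
  also have "\<dots> = 6 * tau n F" by (simp add: tau_def)
  finally show ?thesis using eq by simp
qed

lemma cut_count:
  assumes F: "F \<subseteq> edges_K n" and W: "W \<subseteq> {1..n}"
  shows "2 * real (card (F - cut_K n W)) = (\<Sum>x\<in>{1..n}. \<Sum>y\<in>{1..n}.
           if {x,y} \<in> F \<and> (x \<in> W \<longleftrightarrow> y \<in> W) then 1 else (0::real))"
proof -
  have "2 * real (card (F - cut_K n W)) = (\<Sum>x\<in>{1..n}. \<Sum>y\<in>{1..n}. if {x,y} \<in> F - cut_K n W then 1 else (0::real))"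
    by (rule edge_count) (use F in auto)
  also have "\<dots> = (\<Sum>x\<in>{1..n}. \<Sum>y\<in>{1..n}.
           if {x,y} \<in> F \<and> (x \<in> W \<longleftrightarrow> y \<in> W) then 1 else (0::real))"
  proof (intro sum.cong refl)
    fix x y assume x: "x \<in> {1..n}" and y: "y \<in> {1..n}"
    have "{x,y} \<in> cut_K n W \<longleftrightarrow> {x,y} \<in> edges_K n \<and> \<not> (x \<in> W \<longleftrightarrow> y \<in> W)"
      unfolding cut_K_def using x y by (auto simp: doubleton_eq_iff)
    then show "(if {x,y} \<in> F - cut_K n W then 1 else (0::real)) =
           (if {x,y} \<in> F \<and> (x \<in> W \<longleftrightarrow> y \<in> W) then 1 else 0)"
      using F by auto
  qed
  finally show ?thesis .
qed

lemma key_ineq: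
  fixes m N d e :: real
  assumes "m > (1 - d) * N^2 / 4" "0 \<le> d" "e > 0" "m \<ge> 0"
  shows "e * N^4 + 3 * d * N^4 - 2 * m * N^2 + 8 * m^2 \<ge> 0"
proof (cases "4 * m \<ge> N^2")
  case True
  then have "2 * m * (4 * m - N^2) \<ge> 0" using assms by simp
  moreover have "e * N^4 \<ge> 0" "d * N^4 \<ge> 0" using assms by simp_all
  ultimately show ?thesis by (simp add: algebra_simps power2_eq_square)
next
  case False
  have h1: "4 * m - N^2 > - d * N^2" using assms(1) by (simp add: algebra_simps)
  have "2 * m * (4 * m - N^2) \<ge> 2 * m * (- d * N^2)"
    using h1 assms(4) by (intro mult_left_mono) auto
  moreover have "2 * m * (d * N^2) \<le> (N^2 / 2) * (d * N^2)"
    using False assms by (intro mult_right_mono) auto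
  moreover have "e * N^4 \<ge> 0" "d * N^4 \<ge> 0" using assms by simp_all
  ultimately show ?thesis by (simp add: algebra_simps power2_eq_square power4_eq_xxxx)
qed

theorem lemma3p3:
  shows "\<exists>g :: nat \<Rightarrow> real. g \<longlonglongrightarrow> 0 \<and>
    (\<forall>n :: nat. \<forall>(\<delta>::real) (\<eta>::real) (F :: nat set set).
       0 \<le> \<delta> \<and> \<delta> \<le> 1 \<and> \<eta> > 0 \<and> F \<subseteq> edges_K n \<and>
       real (card F) > (1 - \<delta>) * real n ^ 2 / 4 \<and>
       (\<forall>P. is_cut n P \<longrightarrow> real (card (F - P)) > \<eta> * real n ^ 2)
       \<longrightarrow> real (tau n F) > (\<eta> - 3 * \<delta> - g n) * real n ^ 3 / 12)"
proof (intro exI[of _ "\<lambda>_. 0"] conjI allI impI)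
  show "(\<lambda>_. 0::real) \<longlonglongrightarrow> 0" by simp
next
  fix n :: nat and \<delta> \<eta> :: real and F :: "nat set set"
  assume H: "0 \<le> \<delta> \<and> \<delta> \<le> 1 \<and> \<eta> > 0 \<and> F \<subseteq> edges_K n \<and>
       real (card F) > (1 - \<delta>) * real n ^ 2 / 4 \<and>
       (\<forall>P. is_cut n P \<longrightarrow> real (card (F - P)) > \<eta> * real n ^ 2)"
  then have d0: "0 \<le> \<delta>" and d1: "\<delta> \<le> 1" and e0: "\<eta> > 0" and F: "F \<subseteq> edges_K n"
    and mF: "real (card F) > (1 - \<delta>) * real n ^ 2 / 4"
    and cutH: "\<And>P. is_cut n P \<Longrightarrow> real (card (F - P)) > \<eta> * real n ^ 2" by auto
  let ?V = "{1..n}"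
  define a where "a x y = (if {x,y} \<in> F then 1 else (0::real))" for x y
  define D where "D x = (\<Sum>y\<in>?V. a x y)" for x
  define M where "M = (\<Sum>x\<in>?V. D x)"
  define Q where "Q = (\<Sum>x\<in>?V. D x * D x)"
  define S4 where "S4 = (\<Sum>x\<in>?V. \<Sum>y\<in>?V. \<Sum>z\<in>?V. a x y * a y z * a x z)"
  have asym: "a x y = a y x" for x y by (simp add: a_def insert_commute)
  have a01: "a x y = 0 \<or> a x y = 1" for x y by (simp add: a_def)
  have "n > 0"
  proof (rule ccontr)
    assume "\<not> n > 0"
    then have n0: "n = 0" by simp
    have "edges_K 0 = {}" by (auto simp: edges_K_def)
    then have "F = {}" using F n0 by auto
    moreover have "is_cut n (cut_K n {})" by (auto simp: is_cut_def)
    ultimately show False using cutH[of "cut_K n {}"] n0 by simp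
  qed
  have M_eq: "M = 2 * real (card F)"
    unfolding M_def D_def a_def using edge_count[OF F] by simp
  have S4_le: "S4 \<le> 6 * real (tau n F)"
    unfolding S4_def a_def using tri_count[OF F] by simp
  have per_v: "2 * \<eta> * real n ^ 2 < (\<Sum>x\<in>?V. \<Sum>y\<in>?V.
      a x y - a x y * a v x - a x y * a v y + 2 * (a v x * a x y * a v y))" if v: "v \<in> ?V" for v
  proof -
    define W where "W = {y\<in>?V. {v,y} \<in> F}"
    have Wsub: "W \<subseteq> ?V" by (auto simp: W_def)
    have "is_cut n (cut_K n W)" using Wsub by (auto simp: is_cut_def)
    then have "2 * \<eta> * real n ^ 2 < 2 * real (card (F - cut_K n W))" using cutH by force
    also have "\<dots> = (\<Sum>x\<in>?V. \<Sum>y\<in>?V. if {x,y} \<in> F \<and> (x \<in> W \<longleftrightarrow> y \<in> W) then 1 else (0::real))"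
      by (rule cut_count[OF F Wsub])
    also have "\<dots> = (\<Sum>x\<in>?V. \<Sum>y\<in>?V.
      a x y - a x y * a v x - a x y * a v y + 2 * (a v x * a x y * a v y))"
    proof (intro sum.cong refl)
      fix x y assume x: "x \<in> ?V" and y: "y \<in> ?V"
      have "x \<in> W \<longleftrightarrow> a v x = 1" "y \<in> W \<longleftrightarrow> a v y = 1" using x y by (auto simp: W_def a_def)
      then show "(if {x,y} \<in> F \<and> (x \<in> W \<longleftrightarrow> y \<in> W) then 1 else (0::real)) =
          a x y - a x y * a v x - a x y * a v y + 2 * (a v x * a x y * a v y)"
        using a01[of v x] a01[of v y] by (auto simp: a_def)
    qed
    finally show ?thesis .
  qed
  have sum_lt: "(\<Sum>v\<in>?V. 2 * \<eta> * real n ^ 2) < (\<Sum>v\<in>?V. \<Sum>x\<in>?V. \<Sum>y\<in>?V.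
      a x y - a x y * a v x - a x y * a v y + 2 * (a v x * a x y * a v y))"
    using \<open>n > 0\<close> by (intro sum_strict_mono per_v) auto
  have sumL: "(\<Sum>v\<in>?V. 2 * \<eta> * real n ^ 2) = 2 * \<eta> * real n ^ 3"
    by (simp add: power3_eq_cube power2_eq_square)
  have e1: "(\<Sum>v\<in>?V. \<Sum>x\<in>?V. \<Sum>y\<in>?V.
      a x y - a x y * a v x - a x y * a v y + 2 * (a v x * a x y * a v y))
    = (\<Sum>v\<in>?V. \<Sum>x\<in>?V. \<Sum>y\<in>?V. a x y) - (\<Sum>v\<in>?V. \<Sum>x\<in>?V. \<Sum>y\<in>?V. a x y * a v x)
      - (\<Sum>v\<in>?V. \<Sum>x\<in>?V. \<Sum>y\<in>?V. a x y * a v y) + 2 * S4"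
    unfolding S4_def by (simp add: sum.distrib sum_subtractf sum_distrib_left)
  have e2: "(\<Sum>v\<in>?V. \<Sum>x\<in>?V. \<Sum>y\<in>?V. a x y) = real n * M"
    by (simp add: M_def D_def)
  have e3: "(\<Sum>v\<in>?V. \<Sum>x\<in>?V. \<Sum>y\<in>?V. a x y * a v x) = Q"
  proof -
    have "(\<Sum>v\<in>?V. \<Sum>x\<in>?V. \<Sum>y\<in>?V. a x y * a v x) = (\<Sum>x\<in>?V. \<Sum>v\<in>?V. \<Sum>y\<in>?V. a x y * a v x)"
      by (rule sum.swap)
    also have "\<dots> = (\<Sum>x\<in>?V. \<Sum>v\<in>?V. a x v * D x)"
      by (simp add: D_def sum_distrib_left sum_distrib_right asym mult.commute)
    also have "\<dots> = Q"
      by (simp add: Q_def D_def sum_distrib_left sum_distrib_right mult.commute)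
    finally show ?thesis .
  qed
  have e4: "(\<Sum>v\<in>?V. \<Sum>x\<in>?V. \<Sum>y\<in>?V. a x y * a v y) = Q"
  proof -
    have "(\<Sum>v\<in>?V. \<Sum>x\<in>?V. \<Sum>y\<in>?V. a x y * a v y) = (\<Sum>v\<in>?V. \<Sum>y\<in>?V. \<Sum>x\<in>?V. a y x * a v y)"
      by (rule sum.cong[OF refl], subst sum.swap, (rule sum.cong[OF refl])+, subst asym, rule refl)
    then show ?thesis using e3 by simp
  qed
  have CS: "M * M \<le> real n * Q"
  proof -
    have "0 \<le> (\<Sum>x\<in>?V. (real n * D x - M)^2)" by (simp add: sum_nonneg)
    also have "\<dots> = real n * real n * Q - 2 * real n * M * M + real n * M * M"
      by (simp add: power2_diff sum.distrib sum_subtractf sum_distrib_left Q_def M_def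
            power2_eq_square algebra_simps)
    finally have "0 \<le> real n * (real n * Q - M * M)" by (simp add: algebra_simps)
    then show ?thesis using \<open>n > 0\<close> by (simp add: zero_le_mult_iff)
  qed
  define m where "m = real (card F)"
  define N where "N = real n"
  define t where "t = real (tau n F)"
  have N0: "N > 0" using \<open>n>0\<close> by (simp add: N_def)
  have A1: "2 * \<eta> * N ^ 3 < N * (2 * m) - 2 * Q + 2 * S4"
  proof -
    have "2 * \<eta> * real n ^ 3 < real n * M - Q - Q + 2 * S4"
      using sum_lt unfolding sumL e1 e2 e3 e4 .
    then show ?thesis unfolding M_eq N_def m_def by simp
  qed
  have A2: "S4 \<le> 6 * t" using S4_le by (simp add: t_def)
  have A3: "4 * m * m \<le> N * Q" using CS M_eq by (simp add: N_def m_def)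
  have A4: "\<eta> * N^4 + 3 * \<delta> * N^4 - 2 * m * N^2 + 8 * m^2 \<ge> 0"
    by (rule key_ineq) (use mF d0 e0 in \<open>auto simp: m_def N_def\<close>)
  have "12 * t * N > 2 * \<eta> * N ^ 4 - 2 * m * N^2 + 2 * N * Q"
  proof -
    have "12 * t > 2 * \<eta> * N ^ 3 - 2 * m * N + 2 * Q" using A1 A2 by (simp add: algebra_simps)
    then have "N * (12 * t) > N * (2 * \<eta> * N ^ 3 - 2 * m * N + 2 * Q)"
      using N0 by (intro mult_strict_left_mono) auto
    then show ?thesis by (simp add: algebra_simps power2_eq_square power3_eq_cube power4_eq_xxxx)
  qed
  then have "12 * t * N > (\<eta> - 3 * \<delta>) * N ^ 4"
    using A3 A4 by (simp add: algebra_simps power2_eq_square)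
  then have "N * (12 * t) > N * ((\<eta> - 3 * \<delta>) * N ^ 3)"
    by (simp add: algebra_simps power3_eq_cube power4_eq_xxxx)
  then have "12 * t > (\<eta> - 3 * \<delta>) * N ^ 3" using N0 by (simp add: mult_less_cancel_left_pos)
  then show "real (tau n F) > (\<eta> - 3 * \<delta> - 0) * real n ^ 3 / 12"
    by (simp add: t_def N_def)
qed

end
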